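(* Let $N\ge 2$, $p\ge 2$, $0<r_0<R_0\le\infty$, $\Omega=B]r_0,R_0[$, and let $V\in C(\Omega)$ satisfy either $V>0$ in $\Omega$ or $V\equiv 0$. Let $u$ be a positive radial strictly monotone $C^2$-subsolution and $v$ a positive radial strictly monotone $C^2$-supersolution of $-\Delta_p w-V|w|^{p-2}w=0$ in $\Omega$. Then at least one of the following holds: (i) $(u/v)'(r)\le 0$ for all $r\in[r_0,R_0[$; (ii) there exists $\rho^*\in[r_0,R_0[$ such that $(u/v)'(r)\ge 0$ for all $r\in[\rho^*,R_0[$.
   Context: $\Delta_p w=\nabla\cdot(|\nabla w|^{p-2}\nabla w)$. $B]r_0,R_0[=\{x\in\mathbb{R}^N: r_0<|x|<R_0\}$, $B[r_0,R_0[=\{x: r_0\le|x|<R_0\}$. A $C^2$-subsolution (resp. supersolution) in $\Omega$ is $w\in C^2(B[r_0,R_0[)$ with $-\Delta_p w-V|w|^{p-2}w\le 0$ (resp. $\ge0$) pointwise in $\Omega$. Radial functions $w(x)=\phi(|x|)$ are identified with $\phi$ and $'$ denotes derivative in $r=|x|$; strictly monotone means $w'>0$ on $[r_0,R_0[$ or $w'<0$ on $[r_0,R_0[$. *)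

theory Defs
  imports "HOL-Analysis.Analysis"
begin

definition grad :: "('a::euclidean_space \<Rightarrow> real) \<Rightarrow> 'a \<Rightarrow> 'a" where
  "grad w x = (\<Sum>i\<in>Basis. frechet_derivative w (at x) i *\<^sub>R i)"

definition divergence :: "('a::euclidean_space \<Rightarrow> 'a) \<Rightarrow> 'a \<Rightarrow> real" where
  "divergence F x = (\<Sum>i\<in>Basis. frechet_derivative F (at x) i \<bullet> i)"

definition rpow :: "real \<Rightarrow> real \<Rightarrow> real" where
  "rpow t a = (if a = 0 then 1 else t powr a)"

definition plap :: "real \<Rightarrow> ('a::euclidean_space \<Rightarrow> real) \<Rightarrow> 'a \<Rightarrow> real" where
  "plap p w = divergence (\<lambda>y. rpow (norm (grad w y)) (p - 2) *\<^sub>R grad w y)"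

definition C2_on :: "'a::euclidean_space set \<Rightarrow> ('a \<Rightarrow> real) \<Rightarrow> bool" where
  "C2_on U w \<longleftrightarrow> open U \<and>
     (\<forall>x\<in>U. w differentiable (at x)) \<and> continuous_on U (grad w) \<and>
     (\<forall>x\<in>U. grad w differentiable (at x)) \<and>
     (\<forall>i\<in>Basis. continuous_on U (\<lambda>x. frechet_derivative (grad w) (at x) i))"

definition annulus_oo :: "real \<Rightarrow> ereal \<Rightarrow> 'a::euclidean_space set" where
  "annulus_oo r0 R0 = {x. r0 < norm x \<and> ereal (norm x) < R0}"

definition annulus_co :: "real \<Rightarrow> ereal \<Rightarrow> 'a::euclidean_space set" where
  "annulus_co r0 R0 = {x. r0 \<le> norm x \<and> ereal (norm x) < R0}"

definition C2_annulus :: "real \<Rightarrow> ereal \<Rightarrow> ('a::euclidean_space \<Rightarrow> real) \<Rightarrow> bool" where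
  "C2_annulus r0 R0 w \<longleftrightarrow> (\<exists>U. annulus_co r0 R0 \<subseteq> U \<and> C2_on U w)"

end

theory Submission
  imports Defs
begin

definition Gf :: "real \<Rightarrow> real \<Rightarrow> real" where
  "Gf p t = rpow \<bar>t\<bar> (p - 2) * t"

lemma rpow_pos: "t > 0 \<Longrightarrow> rpow t c > 0"
  by (simp add: rpow_def)

lemma rpow_nonneg: "t \<ge> 0 \<Longrightarrow> rpow t c \<ge> 0"
  by (simp add: rpow_def)

lemma rpow_mult: "x \<ge> 0 \<Longrightarrow> y \<ge> 0 \<Longrightarrow> rpow (x*y) c = rpow x c * rpow y c"
  by (simp add: rpow_def powr_mult)

lemma rpow_eq_powr: "t > 0 \<Longrightarrow> rpow t c = t powr c"
  by (simp add: rpow_def)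

lemma Gf_pos_eq: assumes "p \<ge> 2" "t > 0" shows "Gf p t = t powr (p - 1)"
proof -
  have "t powr (p - 1) = t powr ((p - 2) + 1)" by simp
  also have "\<dots> = t powr (p-2) * t powr 1" by (rule powr_add)
  also have "\<dots> = t powr (p-2) * t" using assms(2) by simp
  finally show ?thesis using assms(2) by (simp add: Gf_def rpow_def)
qed

lemma Gf_deriv:
  assumes p: "p \<ge> 2" and t: "t \<noteq> 0"
  shows "(Gf p has_real_derivative (p - 1) * rpow \<bar>t\<bar> (p - 2)) (at t)"
proof (cases "t > 0")
  case True
  have "((\<lambda>s. s powr (p - 1)) has_real_derivative (p - 1) * t powr (p - 1 - 1)) (at t)"
    by (rule has_real_derivative_powr[OF True])
  moreover have "(p - 1) * t powr (p - 1 - 1) = (p - 1) * rpow \<bar>t\<bar> (p - 2)"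
    using True by (simp add: rpow_eq_powr)
  ultimately have d: "((\<lambda>s. s powr (p - 1)) has_real_derivative (p - 1) * rpow \<bar>t\<bar> (p - 2)) (at t)"
    by metis
  show ?thesis
    by (rule has_field_derivative_transform_within_open[OF d, of "{0<..}"])
       (use True p in \<open>auto simp: Gf_pos_eq\<close>)
next
  case False
  then have tn: "-t > 0" using t by simp
  have "((\<lambda>s. s powr (p - 1)) has_real_derivative (p - 1) * (-t) powr (p - 1 - 1)) (at (-t))"
    by (rule has_real_derivative_powr[OF tn])
  then have "((\<lambda>s. - ((- s) powr (p - 1))) has_real_derivative (p - 1) * (-t) powr (p - 1 - 1)) (at t)"
    using tn by (auto intro!: derivative_eq_intros DERIV_chain2[where f="\<lambda>s. s powr (p-1)"])
  moreover have "(p - 1) * (-t) powr (p - 1 - 1) = (p - 1) * rpow \<bar>t\<bar> (p - 2)"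
    using tn by (simp add: rpow_eq_powr)
  ultimately have d: "((\<lambda>s. - ((- s) powr (p - 1))) has_real_derivative (p - 1) * rpow \<bar>t\<bar> (p - 2)) (at t)"
    by metis
  have e: "Gf p s = - ((- s) powr (p - 1))" if "s < 0" for s
  proof -
    have "Gf p s = - Gf p (-s)" by (simp add: Gf_def)
    also have "\<dots> = - ((- s) powr (p - 1))" using that p by (simp add: Gf_pos_eq)
    finally show ?thesis .
  qed
  show ?thesis
    by (rule has_field_derivative_transform_within_open[OF d, of "{..<0}"])
       (use tn e in auto)
qed

lemma K_mono:
  assumes p: "p \<ge> 2" and "0 \<le> x" "x < y"
  shows "Gf p x < Gf p y"
proof (cases "x = 0")
  case True
  then show ?thesis using assms rpow_pos[of y "p-2"] by (simp add: Gf_def)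
next
  case False
  then show ?thesis using assms by (simp add: Gf_pos_eq powr_less_mono2)
qed

lemma Gf_odd: "Gf p (-t) = - Gf p t" by (simp add: Gf_def)

lemma Gf_mono:
  assumes p: "p \<ge> 2" and "x < y"
  shows "Gf p x < Gf p y"
proof -
  have nn: "Gf p t \<ge> 0" if "t \<ge> 0" for t using that by (simp add: Gf_def rpow_nonneg)
  consider "0 \<le> x" | "x < 0" "0 \<le> y" | "y < 0" using assms by linarith
  then show ?thesis
  proof cases
    case 1 then show ?thesis using K_mono assms by blast
  next
    case 2
    have "Gf p x = - Gf p (-x)" by (simp add: Gf_def)
    moreover have "Gf p (-x) > Gf p 0" using K_mono[OF p, of 0 "-x"] 2 by simp
    ultimately show ?thesis using nn[of y] 2 by (simp add: Gf_def)
  next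
    case 3
    have "Gf p (-y) < Gf p (-x)" using K_mono[OF p, of "-y" "-x"] 3 assms by simp
    then show ?thesis by (simp add: Gf_def)
  qed
qed

lemma M_mono:
  assumes p: "p \<ge> 2" and "\<bar>x\<bar> < \<bar>y\<bar>"
  shows "rpow (abs x) (p-2) * x^2 < rpow (abs y) (p-2) * y^2"
proof -
  have a: "Gf p \<bar>x\<bar> < Gf p \<bar>y\<bar>" using K_mono[OF p, of "\<bar>x\<bar>" "\<bar>y\<bar>"] assms by simp
  have b: "Gf p \<bar>x\<bar> \<ge> 0" by (simp add: Gf_def rpow_nonneg)
  have "Gf p \<bar>x\<bar> * \<bar>x\<bar> < Gf p \<bar>y\<bar> * \<bar>y\<bar>"
    using a b assms by (meson abs_ge_zero le_less_trans less_eq_real_def mult_strict_mono)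
  then show ?thesis by (simp add: Gf_def power2_eq_square abs_mult_self_eq mult.assoc)
qed


lemma radial_has_derivative:
  fixes y :: "'a::euclidean_space"
  assumes "y \<noteq> 0" "(f has_real_derivative f1) (at (norm y))"
  shows "((\<lambda>x. f (norm x)) has_derivative (\<lambda>h. f1 * (h \<bullet> sgn y))) (at y)"
  using has_derivative_compose[OF has_derivative_norm[OF assms(1)] assms(2)[unfolded has_field_derivative_def]]
  by (simp add: o_def)

lemma radial_grad:
  fixes y :: "'a::euclidean_space"
  assumes "y \<noteq> 0" "(f has_real_derivative f1) (at (norm y))"
  shows "grad (\<lambda>x. f (norm x)) y = f1 *\<^sub>R sgn y"
proof -
  have "frechet_derivative (\<lambda>x. f (norm x)) (at y) = (\<lambda>h. f1 * (h \<bullet> sgn y))"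
    using frechet_derivative_at[OF radial_has_derivative[OF assms]] by simp
  then have "grad (\<lambda>x. f (norm x)) y = (\<Sum>i\<in>Basis. (f1 * (i \<bullet> sgn y)) *\<^sub>R i)"
    by (simp add: grad_def)
  also have "\<dots> = f1 *\<^sub>R (\<Sum>i\<in>Basis. (sgn y \<bullet> i) *\<^sub>R i)"
    by (simp add: scaleR_sum_right inner_commute)
  also have "\<dots> = f1 *\<^sub>R sgn y" by (simp add: euclidean_representation)
  finally show ?thesis .
qed

lemma div_radial:
  fixes y :: "'a::euclidean_space" and F :: "'a \<Rightarrow> 'a"
  assumes y: "y \<noteq> 0" and H: "(H has_real_derivative H1) (at (norm y))"
    and S: "open S" "y \<in> S" and F: "\<And>z. z \<in> S \<Longrightarrow> F z = (H (norm z) / norm z) *\<^sub>R z"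
  shows "divergence F y = H1 + (real DIM('a) - 1) * H (norm y) / norm y"
proof -
  define r where "r = norm y"
  have r: "r > 0" using y by (simp add: r_def)
  define k1 where "k1 = (H1 * r - H r) / r^2"
  have dk: "((\<lambda>t. H t / t) has_real_derivative k1) (at (norm y))"
    using H r unfolding r_def k1_def
    by (auto intro!: derivative_eq_intros simp: power2_eq_square field_simps)
  have d1: "((\<lambda>z. H (norm z) / norm z) has_derivative (\<lambda>h. k1 * (h \<bullet> sgn y))) (at y)"
    using radial_has_derivative[OF y dk] .
  have d2: "((\<lambda>z. (H (norm z) / norm z) *\<^sub>R z) has_derivative
     (\<lambda>h. (H r / r) *\<^sub>R h + (k1 * (h \<bullet> sgn y)) *\<^sub>R y)) (at y)"
    using has_derivative_scaleR[OF d1 has_derivative_ident] unfolding r_def by simp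
  have d3: "(F has_derivative (\<lambda>h. (H r / r) *\<^sub>R h + (k1 * (h \<bullet> sgn y)) *\<^sub>R y)) (at y)"
    by (rule has_derivative_transform_within_open[OF d2 S]) (simp add: F)
  have fd: "frechet_derivative F (at y) = (\<lambda>h. (H r / r) *\<^sub>R h + (k1 * (h \<bullet> sgn y)) *\<^sub>R y)"
    using frechet_derivative_at[OF d3] by simp
  have "divergence F y = (\<Sum>i\<in>Basis. ((H r / r) *\<^sub>R i + (k1 * (i \<bullet> sgn y)) *\<^sub>R y) \<bullet> i)"
    by (simp add: divergence_def fd)
  also have "\<dots> = (\<Sum>i\<in>Basis. H r / r + k1 * ((sgn y \<bullet> i) * (y \<bullet> i)))"
  proof (intro sum.cong refl)
    fix i :: 'a assume i: "i \<in> Basis"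
    have "((H r / r) *\<^sub>R i + (k1 * (i \<bullet> sgn y)) *\<^sub>R y) \<bullet> i
        = (H r / r) * (i \<bullet> i) + k1 * (i \<bullet> sgn y) * (y \<bullet> i)"
      by (simp add: inner_add_left)
    also have "i \<bullet> i = 1" using i by simp
    finally show "((H r / r) *\<^sub>R i + (k1 * (i \<bullet> sgn y)) *\<^sub>R y) \<bullet> i
        = H r / r + k1 * ((sgn y \<bullet> i) * (y \<bullet> i))" by (simp add: inner_commute)
  qed
  also have "\<dots> = real DIM('a) * (H r / r) + k1 * (sgn y \<bullet> y)"
    by (simp add: sum.distrib sum_distrib_left euclidean_inner[of "sgn y" y])
  also have "sgn y \<bullet> y = r"
    using y by (simp add: sgn_div_norm r_def dot_square_norm power2_eq_square)
  also have "k1 * r = H1 - H r / r" using r by (simp add: k1_def field_simps power2_eq_square)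
  finally show ?thesis
    unfolding r_def[symmetric] by (simp add: algebra_simps diff_divide_distrib)
qed


lemma plap_radial:
  fixes y :: "'a::euclidean_space" and f f1 :: "real \<Rightarrow> real"
  assumes y: "y \<noteq> 0" and S: "open S" "y \<in> S"
    and d: "\<And>z. z \<in> S \<Longrightarrow> z \<noteq> 0 \<and> (f has_real_derivative f1 (norm z)) (at (norm z))"
    and d2: "(f1 has_real_derivative f2) (at (norm y))" and nz: "f1 (norm y) \<noteq> 0" and p: "p \<ge> 2"
  shows "plap p (\<lambda>x. f (norm x)) y =
    (p - 1) * rpow \<bar>f1 (norm y)\<bar> (p - 2) * f2 + (real DIM('a) - 1) * Gf p (f1 (norm y)) / norm y"
proof -
  have F: "rpow (norm (grad (\<lambda>x. f (norm x)) z)) (p - 2) *\<^sub>R grad (\<lambda>x. f (norm x)) z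
      = (Gf p (f1 (norm z)) / norm z) *\<^sub>R z" if "z \<in> S" for z
  proof -
    have z: "z \<noteq> 0" and dz: "(f has_real_derivative f1 (norm z)) (at (norm z))" using d[OF that] by auto
    have g: "grad (\<lambda>x. f (norm x)) z = f1 (norm z) *\<^sub>R sgn z" using radial_grad[OF z dz] .
    have n: "norm (grad (\<lambda>x. f (norm x)) z) = \<bar>f1 (norm z)\<bar>" using z by (simp add: g norm_sgn)
    show ?thesis
      unfolding n unfolding g using z by (simp add: Gf_def sgn_div_norm divide_inverse)
  qed
  have H: "((\<lambda>t. Gf p (f1 t)) has_real_derivative (p - 1) * rpow \<bar>f1 (norm y)\<bar> (p - 2) * f2) (at (norm y))"
    using DERIV_chain2[OF Gf_deriv[OF p nz] d2] by (simp add: mult.assoc)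
  show ?thesis
    unfolding plap_def
    by (rule div_radial[OF y H S]) (simp add: F)
qed

lemma radial_C2:
  fixes f :: "real \<Rightarrow> real" and e :: "'a::euclidean_space"
  assumes C: "C2_on U (\<lambda>x. f (norm x))" and e: "norm e = 1" and s: "0 < s" "s *\<^sub>R e \<in> U"
  shows "(f has_real_derivative deriv f s) (at s)"
    "(deriv f has_real_derivative deriv (deriv f) s) (at s)"
proof -
  define w where "w = (\<lambda>x::'a. f (norm x))"
  define S where "S = {0<..} \<inter> (\<lambda>t. t *\<^sub>R e) -` U"
  have U: "open U" "\<forall>x\<in>U. w differentiable (at x)" "\<forall>x\<in>U. grad w differentiable (at x)"
    using C unfolding C2_on_def w_def by auto
  have oS: "open S" unfolding S_def
    by (intro open_Int open_greaterThan continuous_open_vimage U) (auto intro: continuous_intros)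
  have fw: "f t = w (t *\<^sub>R e)" if "t > 0" for t
    using that e by (simp add: w_def)
  have df: "(f has_real_derivative deriv f t) (at t)" if "t \<in> S" for t
  proof -
    have t: "t > 0" "t *\<^sub>R e \<in> U" using that by (auto simp: S_def)
    have "(\<lambda>t. w (t *\<^sub>R e)) differentiable (at t)"
      by (rule differentiable_compose[where g="\<lambda>t. t *\<^sub>R e"]) (use U t in auto)
    then obtain D where "((\<lambda>t. w (t *\<^sub>R e)) has_derivative D) (at t)"
      by (auto simp: differentiable_def)
    then have "(f has_derivative D) (at t)"
      by (rule has_derivative_transform_within_open[where s="{0<..}"]) (use t fw in auto)
    then have "f differentiable (at t)" by (auto simp: differentiable_def)
    then show ?thesis by (simp add: DERIV_deriv_iff_real_differentiable)
  qed
  have sS: "s \<in> S" using s by (simp add: S_def)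
  show "(f has_real_derivative deriv f s) (at s)" using df[OF sS] .
  have eq: "deriv f t = grad w (t *\<^sub>R e) \<bullet> e" if "t \<in> S" for t
  proof -
    have t: "t > 0" using that by (simp add: S_def)
    have n: "norm (t *\<^sub>R e) = t" using t e by simp
    have "grad w (t *\<^sub>R e) = deriv f t *\<^sub>R sgn (t *\<^sub>R e)"
      unfolding w_def using radial_grad[of "t *\<^sub>R e" f "deriv f t"] df[OF that] t e n by fastforce
    also have "sgn (t *\<^sub>R e) = e" using t e by (simp add: sgn_div_norm n)
    finally show ?thesis using e by (simp add: dot_square_norm)
  qed
  have "(\<lambda>t. grad w (t *\<^sub>R e) \<bullet> e) differentiable (at s)"
  proof (rule differentiable_inner)
    show "(\<lambda>t. grad w (t *\<^sub>R e)) differentiable (at s)"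
      by (rule differentiable_compose[where g="\<lambda>t. t *\<^sub>R e"]) (use U s in auto)
  qed simp
  then obtain D where "((\<lambda>t. grad w (t *\<^sub>R e) \<bullet> e) has_derivative D) (at s)"
    by (auto simp: differentiable_def)
  then have "(deriv f has_derivative D) (at s)"
    by (rule has_derivative_transform_within_open[OF _ oS sS]) (simp add: eq)
  then have "deriv f differentiable (at s)" by (auto simp: differentiable_def)
  then show "(deriv f has_real_derivative deriv (deriv f) s) (at s)"
    by (simp add: DERIV_deriv_iff_real_differentiable)
qed


lemma persist_fwd:
  fixes f f' :: "real \<Rightarrow> real"
  assumes ab: "a \<le> b" and fa: "f a > 0"
    and d: "\<And>t. a \<le> t \<Longrightarrow> t \<le> b \<Longrightarrow> (f has_real_derivative f' t) (at t)"
    and m: "\<And>t. a < t \<Longrightarrow> t < b \<Longrightarrow> f t > 0 \<Longrightarrow> f' t \<ge> 0"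
  shows "f b > 0"
proof (rule ccontr)
  assume nb: "\<not> f b > 0"
  define Z where "Z = {a..b} \<inter> f -` {..0}"
  have cont: "continuous_on {a..b} f"
    using d by (meson DERIV_continuous continuous_at_imp_continuous_on atLeastAtMost_iff)
  have cZ: "closed Z" unfolding Z_def by (rule continuous_closed_preimage[OF cont]) auto
  have bZ: "b \<in> Z" using nb ab by (auto simp: Z_def)
  have bdd: "bdd_below Z" by (auto simp: Z_def bdd_below_def)
  define s where "s = Inf Z"
  have sZ: "s \<in> Z" unfolding s_def using closed_contains_Inf[OF _ bdd cZ] bZ by blast
  have sa: "a < s" using sZ fa by (auto simp: Z_def less_eq_real_def)
  have pos: "f t > 0" if "a \<le> t" "t < s" for t
  proof (rule ccontr)
    assume "\<not> f t > 0"
    then have "t \<in> Z" using that sZ by (auto simp: Z_def)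
    then have "s \<le> t" unfolding s_def using bdd by (rule cInf_lower)
    then show False using that by simp
  qed
  obtain z where z: "a < z" "z < s" "f s - f a = (s - a) * f' z"
    using MVT2[OF sa, of f f'] d sZ by (auto simp: Z_def)
  have "f' z \<ge> 0" using m[of z] pos[of z] z sZ by (auto simp: Z_def)
  then have "f s \<ge> f a" using z sa by (metis diff_ge_0_iff_ge less_eq_real_def mult_nonneg_nonneg sa)
  then show False using sZ fa by (auto simp: Z_def)
qed

lemma persist_bwd:
  fixes f f' :: "real \<Rightarrow> real"
  assumes ab: "a \<le> b" and fb: "f b < 0"
    and d: "\<And>t. a \<le> t \<Longrightarrow> t \<le> b \<Longrightarrow> (f has_real_derivative f' t) (at t)"
    and m: "\<And>t. a < t \<Longrightarrow> t < b \<Longrightarrow> f t < 0 \<Longrightarrow> f' t \<ge> 0"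
  shows "f a < 0"
proof (rule ccontr)
  assume na: "\<not> f a < 0"
  define Z where "Z = {a..b} \<inter> f -` {0..}"
  have cont: "continuous_on {a..b} f"
    using d by (meson DERIV_continuous continuous_at_imp_continuous_on atLeastAtMost_iff)
  have cZ: "closed Z" unfolding Z_def by (rule continuous_closed_preimage[OF cont]) auto
  have aZ: "a \<in> Z" using na ab by (auto simp: Z_def)
  have bdd: "bdd_above Z" by (auto simp: Z_def bdd_above_def)
  define s where "s = Sup Z"
  have sZ: "s \<in> Z" unfolding s_def using closed_contains_Sup[OF _ bdd cZ] aZ by blast
  have sb: "s < b" using sZ fb by (auto simp: Z_def less_eq_real_def)
  have neg: "f t < 0" if "s < t" "t \<le> b" for t
  proof (rule ccontr)
    assume "\<not> f t < 0"
    then have "t \<in> Z" using that sZ by (auto simp: Z_def)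
    then have "t \<le> s" unfolding s_def using bdd by (rule cSup_upper)
    then show False using that by simp
  qed
  obtain z where z: "s < z" "z < b" "f b - f s = (b - s) * f' z"
    using MVT2[OF sb, of f f'] d sZ by (auto simp: Z_def)
  have "f' z \<ge> 0" using m[of z] neg[of z] z sZ by (auto simp: Z_def)
  then have "f b \<ge> f s" using z sb by (metis diff_ge_0_iff_ge less_eq_real_def mult_nonneg_nonneg sb)
  then show False using sZ fb by (auto simp: Z_def)
qed


lemma plap_X:
  fixes y :: "'a::euclidean_space" and f f1 :: "real \<Rightarrow> real"
  assumes p: "p \<ge> 2" and y: "y \<noteq> 0" and S: "open S" "y \<in> S"
    and d: "\<And>z. z \<in> S \<Longrightarrow> z \<noteq> 0 \<and> (f has_real_derivative f1 (norm z)) (at (norm z))"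
    and d2: "(f1 has_real_derivative f2) (at (norm y))" and nz: "f1 (norm y) \<noteq> 0"
    and fpos: "f (norm y) > 0"
  shows "plap p (\<lambda>x. f (norm x)) y + V * \<bar>f (norm y)\<bar> powr (p - 2) * f (norm y)
    = rpow (f (norm y)) (p - 2) * f (norm y) *
      ((p - 1) * rpow \<bar>f1 (norm y) / f (norm y)\<bar> (p - 2) * (f2 / f (norm y))
       + (real DIM('a) - 1) * rpow \<bar>f1 (norm y) / f (norm y)\<bar> (p - 2) * (f1 (norm y) / f (norm y)) / norm y
       + V)"
proof -
  define r where "r = norm y"
  define a where "a = f1 r / f r"
  have fr: "f r > 0" using fpos by (simp add: r_def)
  have f1a: "f1 r = a * f r" using fr by (simp add: a_def)
  have P1: "rpow \<bar>f1 r\<bar> (p - 2) = rpow \<bar>a\<bar> (p - 2) * rpow (f r) (p - 2)"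
    unfolding f1a using fr by (simp add: abs_mult rpow_mult)
  have P2: "\<bar>f r\<bar> powr (p - 2) = rpow (f r) (p - 2)"
    using fr by (simp add: rpow_def)
  have "plap p (\<lambda>x. f (norm x)) y =
    (p - 1) * rpow \<bar>f1 r\<bar> (p - 2) * f2 + (real DIM('a) - 1) * Gf p (f1 r) / r"
    unfolding r_def by (rule plap_radial[OF y S d d2 nz p])
  also have "\<dots> = (p - 1) * (rpow \<bar>a\<bar> (p - 2) * rpow (f r) (p - 2)) * f2
     + (real DIM('a) - 1) * (rpow \<bar>a\<bar> (p - 2) * rpow (f r) (p - 2) * (a * f r)) / r"
    unfolding Gf_def P1 f1a[symmetric] ..
  finally have pl: "plap p (\<lambda>x. f (norm x)) y = (p - 1) * (rpow \<bar>a\<bar> (p - 2) * rpow (f r) (p - 2)) * f2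
     + (real DIM('a) - 1) * (rpow \<bar>a\<bar> (p - 2) * rpow (f r) (p - 2) * (a * f r)) / r" .
  show ?thesis
    unfolding r_def[symmetric] a_def[symmetric] P2 pl
    using fr by (simp add: field_simps)
qed


lemma open_annulus_oo: "open (annulus_oo r0 R0 :: 'a::euclidean_space set)"
proof -
  have "annulus_oo r0 R0 = {x::'a. r0 < norm x} \<inter> {x. ereal (norm x) < R0}"
    by (auto simp: annulus_oo_def)
  moreover have "open {x::'a. ereal (norm x) < R0}"
    by (rule open_Collect_less) (auto intro!: continuous_intros)
  moreover have "open {x::'a. r0 < norm x}"
    by (rule open_Collect_less) (auto intro!: continuous_intros)
  ultimately show ?thesis by auto
qed


lemma radial_facts:
  fixes f :: "real \<Rightarrow> real" and e :: "'a::euclidean_space"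
  assumes C: "C2_annulus r0 R0 (\<lambda>x::'a. f (norm x))" and r0: "0 < r0" and e: "norm e = 1"
    and r: "r0 \<le> r" "ereal r < R0"
  shows "(f has_real_derivative deriv f r) (at r)"
    "(deriv f has_real_derivative deriv (deriv f) r) (at r)"
proof -
  obtain U where U: "annulus_co r0 R0 \<subseteq> U" "C2_on U (\<lambda>x::'a. f (norm x))"
    using C by (auto simp: C2_annulus_def)
  have rp: "0 < r" using r r0 by simp
  have "r *\<^sub>R e \<in> annulus_co r0 R0" using r rp e by (simp add: annulus_co_def)
  then have "r *\<^sub>R e \<in> U" using U by auto
  then show "(f has_real_derivative deriv f r) (at r)"
    "(deriv f has_real_derivative deriv (deriv f) r) (at r)"
    using radial_C2[OF U(2) e rp] by auto
qed

lemma ratio_deriv: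
  assumes "(f has_real_derivative f1) (at r)" "(g has_real_derivative g1) (at r)" "g r > 0" "f r > 0"
  shows "deriv (\<lambda>s. f s / g s) r = (f r / g r) * (f1 / f r - g1 / g r)"
proof -
  have "((\<lambda>s. f s / g s) has_real_derivative (f1 * g r - f r * g1) / (g r * g r)) (at r)"
    using DERIV_divide[OF assms(1,2)] assms(3) by simp
  then have "deriv (\<lambda>s. f s / g s) r = (f1 * g r - f r * g1) / (g r * g r)"
    by (rule DERIV_imp_deriv)
  also have "\<dots> = (f r / g r) * (f1 / f r - g1 / g r)"
    using assms(3,4) by (simp add: field_simps)
  finally show ?thesis .
qed

theorem corollary3p4:
  fixes p r0 :: real and R0 :: ereal
    and V :: "real ^ 'n \<Rightarrow> real"
    and \<phi> \<psi> :: "real \<Rightarrow> real"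
  assumes N2: "CARD('n) \<ge> 2"
    and p2: "p \<ge> 2"
    and r0: "0 < r0" "ereal r0 < R0"
    and Vcont: "continuous_on (annulus_oo r0 R0) V"
    and Vsign: "(\<forall>x\<in>annulus_oo r0 R0. V x > 0) \<or> (\<forall>x\<in>annulus_oo r0 R0. V x = 0)"
    and uC2: "C2_annulus r0 R0 (\<lambda>x::real^'n. \<phi> (norm x))"
    and upos: "\<forall>r. r0 \<le> r \<and> ereal r < R0 \<longrightarrow> \<phi> r > 0"
    and umon: "(\<forall>r. r0 \<le> r \<and> ereal r < R0 \<longrightarrow> deriv \<phi> r > 0) \<or>
               (\<forall>r. r0 \<le> r \<and> ereal r < R0 \<longrightarrow> deriv \<phi> r < 0)"
    and usub: "\<forall>x\<in>annulus_oo r0 R0.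
       - plap p (\<lambda>y. \<phi> (norm y)) x - V x * \<bar>\<phi> (norm x)\<bar> powr (p - 2) * \<phi> (norm x) \<le> 0"
    and vC2: "C2_annulus r0 R0 (\<lambda>x::real^'n. \<psi> (norm x))"
    and vpos: "\<forall>r. r0 \<le> r \<and> ereal r < R0 \<longrightarrow> \<psi> r > 0"
    and vmon: "(\<forall>r. r0 \<le> r \<and> ereal r < R0 \<longrightarrow> deriv \<psi> r > 0) \<or>
               (\<forall>r. r0 \<le> r \<and> ereal r < R0 \<longrightarrow> deriv \<psi> r < 0)"
    and vsup: "\<forall>x\<in>annulus_oo r0 R0.
       - plap p (\<lambda>y. \<psi> (norm y)) x - V x * \<bar>\<psi> (norm x)\<bar> powr (p - 2) * \<psi> (norm x) \<ge> 0"
  shows "(\<forall>r. r0 \<le> r \<and> ereal r < R0 \<longrightarrow> deriv (\<lambda>s. \<phi> s / \<psi> s) r \<le> 0) \<or>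
         (\<exists>\<rho>. r0 \<le> \<rho> \<and> ereal \<rho> < R0 \<and>
              (\<forall>r. \<rho> \<le> r \<and> ereal r < R0 \<longrightarrow> deriv (\<lambda>s. \<phi> s / \<psi> s) r \<ge> 0))"
proof -
  define n where "n = CARD('n)"
  obtain k where k: "n = 2 + k" using N2 unfolding n_def by (metis le_Suc_ex)
  have DIMn: "real DIM(real^'n) - 1 = real (Suc k)" using k by (simp add: n_def)
  obtain e :: "real^'n" where eB: "e \<in> Basis" using nonempty_Basis by blast
  have e: "norm e = 1" using eB by simp
  define \<phi>1 where "\<phi>1 = deriv \<phi>"
  define \<phi>2 where "\<phi>2 = deriv \<phi>1"
  define \<psi>1 where "\<psi>1 = deriv \<psi>"
  define \<psi>2 where "\<psi>2 = deriv \<psi>1"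
  have dphi: "(\<phi> has_real_derivative \<phi>1 r) (at r)" "(\<phi>1 has_real_derivative \<phi>2 r) (at r)"
    if "r0 \<le> r" "ereal r < R0" for r
    using radial_facts[OF uC2 r0(1) e that] unfolding \<phi>1_def \<phi>2_def by auto
  have dpsi: "(\<psi> has_real_derivative \<psi>1 r) (at r)" "(\<psi>1 has_real_derivative \<psi>2 r) (at r)"
    if "r0 \<le> r" "ereal r < R0" for r
    using radial_facts[OF vC2 r0(1) e that] unfolding \<psi>1_def \<psi>2_def by auto
  define a where "a = (\<lambda>s. \<phi>1 s / \<phi> s)"
  define b where "b = (\<lambda>s. \<psi>1 s / \<psi> s)"
  have ratio: "deriv (\<lambda>s. \<phi> s / \<psi> s) r = (\<phi> r / \<psi> r) * (a r - b r)"
    if "r0 \<le> r" "ereal r < R0" for r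
    using ratio_deriv[OF dphi(1)[OF that] dpsi(1)[OF that]] upos vpos that by (simp add: a_def b_def)
  have rpos: "deriv (\<lambda>s. \<phi> s / \<psi> s) r > 0 \<longleftrightarrow> a r > b r"
    and rneg: "deriv (\<lambda>s. \<phi> s / \<psi> s) r < 0 \<longleftrightarrow> a r < b r"
    if "r0 \<le> r" "ereal r < R0" for r
  proof -
    have q: "\<phi> r / \<psi> r > 0" using upos vpos that by simp
    show "deriv (\<lambda>s. \<phi> s / \<psi> s) r > 0 \<longleftrightarrow> a r > b r"
      unfolding ratio[OF that] using q zero_less_mult_iff[of "\<phi> r / \<psi> r" "a r - b r"] by linarith
    show "deriv (\<lambda>s. \<phi> s / \<psi> s) r < 0 \<longleftrightarrow> a r < b r"
      unfolding ratio[OF that] using q mult_less_0_iff[of "\<phi> r / \<psi> r" "a r - b r"] by linarith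
  qed
  have anz: "\<phi>1 r \<noteq> 0" "\<psi>1 r \<noteq> 0" if "r0 \<le> r" "ereal r < R0" for r
    using umon vmon that unfolding \<phi>1_def \<psi>1_def by force+
  define P where "P = (\<lambda>t. rpow \<bar>t\<bar> (p - 2))"
  define D where "D = (\<lambda>r. r ^ Suc k * (Gf p (a r) - Gf p (b r)))"
  define D' where "D' = (\<lambda>r. real (Suc k) * r ^ k * (Gf p (a r) - Gf p (b r))
      + r ^ Suc k * ((p - 1) * P (a r) * (\<phi>2 r / \<phi> r - (a r)\<^sup>2)
                    - (p - 1) * P (b r) * (\<psi>2 r / \<psi> r - (b r)\<^sup>2)))"
  have da: "(a has_real_derivative (\<phi>2 r / \<phi> r - (a r)\<^sup>2)) (at r)"
    and db: "(b has_real_derivative (\<psi>2 r / \<psi> r - (b r)\<^sup>2)) (at r)"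
    if "r0 \<le> r" "ereal r < R0" for r
  proof -
    have pp: "\<phi> r > 0" "\<psi> r > 0" using upos vpos that by auto
    have "(a has_real_derivative (\<phi>2 r * \<phi> r - \<phi>1 r * \<phi>1 r) / (\<phi> r * \<phi> r)) (at r)"
      unfolding a_def using DERIV_divide[OF dphi(2)[OF that] dphi(1)[OF that]] pp by simp
    moreover have "(\<phi>2 r * \<phi> r - \<phi>1 r * \<phi>1 r) / (\<phi> r * \<phi> r) = \<phi>2 r / \<phi> r - (a r)\<^sup>2"
      using pp by (simp add: a_def field_simps power2_eq_square)
    ultimately show "(a has_real_derivative (\<phi>2 r / \<phi> r - (a r)\<^sup>2)) (at r)" by simp
    have "(b has_real_derivative (\<psi>2 r * \<psi> r - \<psi>1 r * \<psi>1 r) / (\<psi> r * \<psi> r)) (at r)"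
      unfolding b_def using DERIV_divide[OF dpsi(2)[OF that] dpsi(1)[OF that]] pp by simp
    moreover have "(\<psi>2 r * \<psi> r - \<psi>1 r * \<psi>1 r) / (\<psi> r * \<psi> r) = \<psi>2 r / \<psi> r - (b r)\<^sup>2"
      using pp by (simp add: b_def field_simps power2_eq_square)
    ultimately show "(b has_real_derivative (\<psi>2 r / \<psi> r - (b r)\<^sup>2)) (at r)" by simp
  qed
  have anz2: "a r \<noteq> 0" "b r \<noteq> 0" if "r0 \<le> r" "ereal r < R0" for r
    using anz[OF that] upos vpos that by (auto simp: a_def b_def)
  have dD: "(D has_real_derivative D' r) (at r)" if "r0 \<le> r" "ereal r < R0" for r
  proof -
    have ga: "((\<lambda>s. Gf p (a s)) has_real_derivative (p - 1) * P (a r) * (\<phi>2 r / \<phi> r - (a r)\<^sup>2)) (at r)"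
      using DERIV_chain2[OF Gf_deriv[OF p2 anz2(1)[OF that]] da[OF that]] by (simp add: P_def)
    have gb: "((\<lambda>s. Gf p (b s)) has_real_derivative (p - 1) * P (b r) * (\<psi>2 r / \<psi> r - (b r)\<^sup>2)) (at r)"
      using DERIV_chain2[OF Gf_deriv[OF p2 anz2(2)[OF that]] db[OF that]] by (simp add: P_def)
    have "(D has_real_derivative (real (Suc k) * r ^ k) * (Gf p (a r) - Gf p (b r))
       + ((p - 1) * P (a r) * (\<phi>2 r / \<phi> r - (a r)\<^sup>2) - (p - 1) * P (b r) * (\<psi>2 r / \<psi> r - (b r)\<^sup>2)) * r ^ Suc k) (at r)"
      unfolding D_def using DERIV_mult[OF DERIV_pow[of "Suc k" r] DERIV_diff[OF ga gb]] by simp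
    then show ?thesis by (simp add: D'_def algebra_simps)
  qed
  have key: "D' t \<ge> (p - 1) * t ^ Suc k * (P (b t) * (b t)\<^sup>2 - P (a t) * (a t)\<^sup>2)"
    if t: "r0 < t" "ereal t < R0" for t
  proof -
    define y where "y = t *\<^sub>R e"
    have tp: "t > 0" using t r0 by simp
    have ny: "norm y = t" using tp e by (simp add: y_def)
    have yS: "y \<in> annulus_oo r0 R0" using ny t by (simp add: annulus_oo_def)
    have y0: "y \<noteq> 0" using ny tp by auto
    have It: "r0 \<le> t" using t by simp
    have zS: "z \<noteq> 0 \<and> (\<phi> has_real_derivative \<phi>1 (norm z)) (at (norm z))"
      and zS': "z \<noteq> 0 \<and> (\<psi> has_real_derivative \<psi>1 (norm z)) (at (norm z))"
      if "z \<in> annulus_oo r0 R0" for z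
    proof -
      have "r0 < norm z" "ereal (norm z) < R0" using that by (auto simp: annulus_oo_def)
      then show "z \<noteq> 0 \<and> (\<phi> has_real_derivative \<phi>1 (norm z)) (at (norm z))"
        "z \<noteq> 0 \<and> (\<psi> has_real_derivative \<psi>1 (norm z)) (at (norm z))"
        using dphi(1)[of "norm z"] dpsi(1)[of "norm z"] r0 by auto
    qed
    have pp: "\<phi> t > 0" "\<psi> t > 0" using upos vpos It t by auto
    have Xu: "plap p (\<lambda>x. \<phi> (norm x)) y + V y * \<bar>\<phi> (norm y)\<bar> powr (p - 2) * \<phi> (norm y)
      = rpow (\<phi> (norm y)) (p - 2) * \<phi> (norm y) *
      ((p - 1) * rpow \<bar>\<phi>1 (norm y) / \<phi> (norm y)\<bar> (p - 2) * (\<phi>2 (norm y) / \<phi> (norm y))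
       + (real DIM(real^'n) - 1) * rpow \<bar>\<phi>1 (norm y) / \<phi> (norm y)\<bar> (p - 2) * (\<phi>1 (norm y) / \<phi> (norm y)) / norm y
       + V y)"
      by (rule plap_X[OF p2 y0 open_annulus_oo yS zS]) (use dphi[OF It t(2)] anz[OF It t(2)] pp ny in auto)
    have Xv: "plap p (\<lambda>x. \<psi> (norm x)) y + V y * \<bar>\<psi> (norm y)\<bar> powr (p - 2) * \<psi> (norm y)
      = rpow (\<psi> (norm y)) (p - 2) * \<psi> (norm y) *
      ((p - 1) * rpow \<bar>\<psi>1 (norm y) / \<psi> (norm y)\<bar> (p - 2) * (\<psi>2 (norm y) / \<psi> (norm y))
       + (real DIM(real^'n) - 1) * rpow \<bar>\<psi>1 (norm y) / \<psi> (norm y)\<bar> (p - 2) * (\<psi>1 (norm y) / \<psi> (norm y)) / norm y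
       + V y)"
      by (rule plap_X[OF p2 y0 open_annulus_oo yS zS']) (use dpsi[OF It t(2)] anz[OF It t(2)] pp ny in auto)
    define X where "X = (p - 1) * P (a t) * (\<phi>2 t / \<phi> t) + real (Suc k) * P (a t) * a t / t + V y"
    define Y where "Y = (p - 1) * P (b t) * (\<psi>2 t / \<psi> t) + real (Suc k) * P (b t) * b t / t + V y"
    have Xu': "plap p (\<lambda>x. \<phi> (norm x)) y + V y * \<bar>\<phi> (norm y)\<bar> powr (p - 2) * \<phi> (norm y)
       = rpow (\<phi> t) (p - 2) * \<phi> t * X"
      using Xu ny DIMn by (simp add: X_def P_def a_def)
    have Xv': "plap p (\<lambda>x. \<psi> (norm x)) y + V y * \<bar>\<psi> (norm y)\<bar> powr (p - 2) * \<psi> (norm y)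
       = rpow (\<psi> t) (p - 2) * \<psi> t * Y"
      using Xv ny DIMn by (simp add: Y_def P_def b_def)
    have "rpow (\<phi> t) (p - 2) * \<phi> t * X \<ge> 0" using usub yS Xu' by force
    moreover have "rpow (\<phi> t) (p - 2) * \<phi> t > 0" using pp rpow_pos[of "\<phi> t" "p - 2"] by simp
    ultimately have X0: "X \<ge> 0" using zero_le_mult_iff[of "rpow (\<phi> t) (p - 2) * \<phi> t" X] by linarith
    have "rpow (\<psi> t) (p - 2) * \<psi> t * Y \<le> 0" using vsup yS Xv' by force
    moreover have "rpow (\<psi> t) (p - 2) * \<psi> t > 0" using pp rpow_pos[of "\<psi> t" "p - 2"] by simp
    ultimately have Y0: "Y \<le> 0" using mult_le_0_iff[of "rpow (\<psi> t) (p - 2) * \<psi> t" Y] by linarith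
    have id: "D' t = t ^ Suc k * (X - Y) + (p - 1) * t ^ Suc k * (P (b t) * (b t)\<^sup>2 - P (a t) * (a t)\<^sup>2)"
      unfolding D'_def X_def Y_def using tp pp by (simp add: Gf_def P_def field_simps power2_eq_square)
    have "t ^ Suc k * (X - Y) \<ge> 0" using X0 Y0 tp by simp
    then show ?thesis unfolding id by linarith
  qed
  have Imono: "ereal t < R0" if "t \<le> r" "ereal r < R0" for t r
    using that by (metis ereal_less_eq(3) order_le_less_trans)
  have Dsign: "(D r < 0 \<longleftrightarrow> a r < b r) \<and> (D r > 0 \<longleftrightarrow> a r > b r)" if "r > 0" for r
  proof -
    have rp: "r ^ Suc k > 0" using that by simp
    consider "a r < b r" | "a r = b r" | "a r > b r" by linarith
    then show ?thesis
    proof cases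
      case 1
      then have "Gf p (a r) - Gf p (b r) < 0" using Gf_mono[OF p2] by auto
      then have "D r < 0" unfolding D_def using rp by (rule mult_pos_neg[rotated])
      then show ?thesis using 1 by auto
    next
      case 2 then show ?thesis unfolding D_def by simp
    next
      case 3
      then have "Gf p (a r) - Gf p (b r) > 0" using Gf_mono[OF p2] by auto
      then have "D r > 0" unfolding D_def using rp by simp
      then show ?thesis using 3 by auto
    qed
  qed
  have Dp: "D' t \<ge> 0" if t: "r0 < t" "ereal t < R0" and ab: "\<bar>a t\<bar> < \<bar>b t\<bar>" for t
  proof -
    have "P (a t) * (a t)\<^sup>2 < P (b t) * (b t)\<^sup>2" using M_mono[OF p2 ab] by (simp add: P_def)
    moreover have "t ^ Suc k > 0" using t r0 by simp
    moreover have "p - 1 > 0" using p2 by simp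
    ultimately have "(p - 1) * t ^ Suc k * (P (b t) * (b t)\<^sup>2 - P (a t) * (a t)\<^sup>2) \<ge> 0" by simp
    then show ?thesis using key[OF t] by linarith
  qed
  have asgn: "(a r > 0 \<and> \<phi>1 r > 0) \<or> (a r < 0 \<and> \<phi>1 r < 0)"
    and bsgn: "(b r > 0 \<and> \<psi>1 r > 0) \<or> (b r < 0 \<and> \<psi>1 r < 0)"
    if "r0 \<le> r" "ereal r < R0" for r
  proof -
    have pp: "\<phi> r > 0" "\<psi> r > 0" using upos vpos that by auto
    show "(a r > 0 \<and> \<phi>1 r > 0) \<or> (a r < 0 \<and> \<phi>1 r < 0)"
      using anz(1)[OF that] pp by (auto simp: a_def zero_less_divide_iff divide_less_0_iff)
    show "(b r > 0 \<and> \<psi>1 r > 0) \<or> (b r < 0 \<and> \<psi>1 r < 0)"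
      using anz(2)[OF that] pp by (auto simp: b_def zero_less_divide_iff divide_less_0_iff)
  qed
  have ua: "a r > 0 \<longleftrightarrow> \<phi>1 r > 0" "b r > 0 \<longleftrightarrow> \<psi>1 r > 0"
    if "r0 \<le> r" "ereal r < R0" for r
    using asgn[OF that] bsgn[OF that] by auto
  show ?thesis
    using umon vmon unfolding \<phi>1_def[symmetric] \<psi>1_def[symmetric]
  proof (elim disjE)
    assume u: "\<forall>r. r0 \<le> r \<and> ereal r < R0 \<longrightarrow> 0 < \<phi>1 r"
      and v: "\<forall>r. r0 \<le> r \<and> ereal r < R0 \<longrightarrow> \<psi>1 r < 0"
    have "\<forall>r. r0 \<le> r \<and> ereal r < R0 \<longrightarrow> deriv (\<lambda>s. \<phi> s / \<psi> s) r \<ge> 0"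
      using u v ua bsgn rpos by (metis less_eq_real_def less_trans not_less)
    then show ?thesis using r0 by auto
  next
    assume u: "\<forall>r. r0 \<le> r \<and> ereal r < R0 \<longrightarrow> \<phi>1 r < 0"
      and v: "\<forall>r. r0 \<le> r \<and> ereal r < R0 \<longrightarrow> 0 < \<psi>1 r"
    have "\<forall>r. r0 \<le> r \<and> ereal r < R0 \<longrightarrow> deriv (\<lambda>s. \<phi> s / \<psi> s) r \<le> 0"
      using u v ua asgn rneg by (metis less_eq_real_def less_trans not_less)
    then show ?thesis by auto
  next
    assume u: "\<forall>r. r0 \<le> r \<and> ereal r < R0 \<longrightarrow> 0 < \<phi>1 r"
      and v: "\<forall>r. r0 \<le> r \<and> ereal r < R0 \<longrightarrow> 0 < \<psi>1 r"
    show ?thesis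
    proof (cases "\<exists>\<rho>. r0 \<le> \<rho> \<and> ereal \<rho> < R0 \<and>
              (\<forall>r. \<rho> \<le> r \<and> ereal r < R0 \<longrightarrow> deriv (\<lambda>s. \<phi> s / \<psi> s) r \<ge> 0)")
      case True then show ?thesis by blast
    next
      case False
      have "deriv (\<lambda>s. \<phi> s / \<psi> s) r \<le> 0" if r: "r0 \<le> r" "ereal r < R0" for r
      proof -
        obtain r1 where r1: "r \<le> r1" "ereal r1 < R0" "deriv (\<lambda>s. \<phi> s / \<psi> s) r1 < 0"
          using False r by (meson not_le)
        have I1: "r0 \<le> r1" using r r1 by simp
        have "a r1 < b r1" using rneg[OF I1 r1(2)] r1(3) by simp
        then have D1: "D r1 < 0" using Dsign[of r1] I1 r0 by simp
        have "D r < 0"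
        proof (rule persist_bwd[where f=D and f'=D', OF r1(1) D1])
          fix t assume "r \<le> t" "t \<le> r1"
          then show "(D has_real_derivative D' t) (at t)"
            using dD[of t] r r1 Imono by simp
        next
          fix t assume t: "r < t" "t < r1" "D t < 0"
          have tI: "r0 < t" "ereal t < R0" using t r r1 Imono[of t r1] by auto
          have ab: "a t < b t" using Dsign[of t] t tI r0 by simp
          have "a t > 0" using ua[of t] u tI by simp
          then show "D' t \<ge> 0" using Dp[OF tI] ab by simp
        qed
        then have "a r < b r" using Dsign[of r] r r0 by simp
        then show ?thesis using rneg[OF r] by simp
      qed
      then show ?thesis by blast
    qed
  next
    assume u: "\<forall>r. r0 \<le> r \<and> ereal r < R0 \<longrightarrow> \<phi>1 r < 0"
      and v: "\<forall>r. r0 \<le> r \<and> ereal r < R0 \<longrightarrow> \<psi>1 r < 0"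
    show ?thesis
    proof (cases "\<forall>r. r0 \<le> r \<and> ereal r < R0 \<longrightarrow> deriv (\<lambda>s. \<phi> s / \<psi> s) r \<le> 0")
      case True then show ?thesis by blast
    next
      case False
      then obtain r1 where r1: "r0 \<le> r1" "ereal r1 < R0" "deriv (\<lambda>s. \<phi> s / \<psi> s) r1 > 0"
        by (meson not_le)
      have "a r1 > b r1" using rpos[OF r1(1,2)] r1(3) by simp
      then have D1: "D r1 > 0" using Dsign[of r1] r1 r0 by simp
      have "deriv (\<lambda>s. \<phi> s / \<psi> s) r \<ge> 0" if r: "r1 \<le> r" "ereal r < R0" for r
      proof -
        have "D r > 0"
        proof (rule persist_fwd[where f=D and f'=D', OF r(1) D1])
          fix t assume "r1 \<le> t" "t \<le> r"
          then show "(D has_real_derivative D' t) (at t)"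
            using dD[of t] r r1 Imono by simp
        next
          fix t assume t: "r1 < t" "t < r" "D t > 0"
          have tI: "r0 < t" "ereal t < R0" using t r r1 Imono[of t r] by auto
          have ab: "a t > b t" using Dsign[of t] t tI r0 by simp
          have "\<psi>1 t < 0" using v tI by simp
          then have "b t < 0" using bsgn[of t] tI by auto
          moreover have "\<phi>1 t < 0" using u tI by simp
          then have "a t < 0" using asgn[of t] tI by auto
          ultimately show "D' t \<ge> 0" using Dp[OF tI] ab by simp
        qed
        then have "a r > b r" using Dsign[of r] r r1 r0 by simp
        then show ?thesis using rpos[of r] r r1 by simp
      qed
      then show ?thesis using r1 by blast
    qed
  qed
qed

end
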